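(* Let $(V,\langle\cdot,\cdot\rangle)$ be an $n$-dimensional real inner product space and $S: V\times V\to\mathbb{R}$ a symmetric bilinear form. Let $W\subset V$ be an $(n-1)$-dimensional subspace and $\nu\in W^\perp$ a unit vector. Fix $1\le m\le n-1$. Then the restriction $S|_W$ is $m$-positive if and only if $S \mathbin{\bigcirc\!\!\!\!\wedge} (\nu^\flat\otimes\nu^\flat)$ lies in the interior of the cone $\mathcal{C}_m(V)$.
   Context: Here $\mathbin{\bigcirc\!\!\!\!\wedge}$ denotes the Kulkarni--Nomizu product, $(S\mathbin{\bigcirc\!\!\!\!\wedge} T)(v_1,v_2,v_3,v_4)=S(v_1,v_3)T(v_2,v_4)+S(v_2,v_4)T(v_1,v_3)-S(v_1,v_4)T(v_2,v_3)-S(v_2,v_3)T(v_1,v_4)$, and $\nu^\flat=\langle\nu,\cdot\rangle$. The cone $\mathcal{C}_m(V)$ consists of algebraic curvature tensors $T$ (4-linear, antisymmetric in the first two slots, pair-symmetric, satisfying the first Bianchi identity) with $\sum_{p=1}^m\sum_{q=p+1}^n T(e_p,e_q,e_p,e_q)\ge 0$ for every orthonormal basis $\{e_i\}$ of $V$. A symmetric bilinear form on $W$ with eigenvalues $\lambda_1\le\dots\le\lambda_{n-1}$ is $m$-positive if $\lambda_1+\dots+\lambda_m>0$. *)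

theory Defs
  imports "HOL-Analysis.Analysis"
begin

type_synonym 'a tensor4 = "'a \<Rightarrow> 'a \<Rightarrow> 'a \<Rightarrow> 'a \<Rightarrow> real"

definition sym_bilinear :: "('a::real_vector \<Rightarrow> 'a \<Rightarrow> real) \<Rightarrow> bool" where
  "sym_bilinear S \<longleftrightarrow> bilinear S \<and> (\<forall>x y. S x y = S y x)"

definition KN :: "('a \<Rightarrow> 'a \<Rightarrow> real) \<Rightarrow> ('a \<Rightarrow> 'a \<Rightarrow> real) \<Rightarrow> 'a tensor4" where
  "KN S T = (\<lambda>v1 v2 v3 v4. S v1 v3 * T v2 v4 + S v2 v4 * T v1 v3
                          - S v1 v4 * T v2 v3 - S v2 v3 * T v1 v4)"

definition flat_sq :: "'a::real_inner \<Rightarrow> 'a \<Rightarrow> 'a \<Rightarrow> real" where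
  "flat_sq \<nu> = (\<lambda>x y. inner \<nu> x * inner \<nu> y)"

definition multilinear4 :: "'a::real_vector tensor4 \<Rightarrow> bool" where
  "multilinear4 T \<longleftrightarrow>
     (\<forall>b c d. linear (\<lambda>a. T a b c d)) \<and> (\<forall>a c d. linear (\<lambda>b. T a b c d)) \<and>
     (\<forall>a b d. linear (\<lambda>c. T a b c d)) \<and> (\<forall>a b c. linear (\<lambda>d. T a b c d))"

definition alg_curv :: "'a::real_vector tensor4 set" where
  "alg_curv = {T. multilinear4 T
      \<and> (\<forall>a b c d. T a b c d = - T b a c d)
      \<and> (\<forall>a b c d. T a b c d = T c d a b)
      \<and> (\<forall>a b c d. T a b c d + T b c a d + T c a b d = 0)}"

definition orthonormal_frame :: "nat \<Rightarrow> (nat \<Rightarrow> 'a::real_inner) \<Rightarrow> bool" where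
  "orthonormal_frame k e \<longleftrightarrow> (\<forall>i<k. \<forall>j<k. inner (e i) (e j) = (if i = j then 1 else 0))"

text \<open>The cone C_m(V) (indices shifted to start at 0).\<close>
definition cone_C :: "nat \<Rightarrow> ('a::euclidean_space) tensor4 set" where
  "cone_C m = {T \<in> alg_curv. \<forall>e. orthonormal_frame DIM('a) e \<longrightarrow>
      (\<Sum>p<m. \<Sum>q\<in>{p+1..<DIM('a)}. T (e p) (e q) (e p) (e q)) \<ge> 0}"

text \<open>lam is the (increasingly ordered) list of eigenvalues of the symmetric form S
  restricted to W, with respect to the inner product: there is an orthonormal basis
  e_0..e_{k-1} of W (k = dim W) diagonalising S with S(e_i,e_i) = lam_i.\<close>
definition eigenvalues_on :: "('a::euclidean_space \<Rightarrow> 'a \<Rightarrow> real) \<Rightarrow> 'a set \<Rightarrow> (nat \<Rightarrow> real) \<Rightarrow> bool" where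
  "eigenvalues_on S W lam \<longleftrightarrow>
     (\<forall>i j. i \<le> j \<longrightarrow> j < dim W \<longrightarrow> lam i \<le> lam j) \<and>
     (\<exists>e. orthonormal_frame (dim W) e \<and> (\<forall>i<dim W. e i \<in> W) \<and> span (e ` {..<dim W}) = W \<and>
          (\<forall>i<dim W. \<forall>j<dim W. S (e i) (e j) = (if i = j then lam i else 0)))"

text \<open>m-positivity of S restricted to W: sum of the m smallest eigenvalues is positive.\<close>
definition m_positive_on :: "nat \<Rightarrow> ('a::euclidean_space \<Rightarrow> 'a \<Rightarrow> real) \<Rightarrow> 'a set \<Rightarrow> bool" where
  "m_positive_on m S W \<longleftrightarrow> (\<exists>lam. eigenvalues_on S W lam \<and> (\<Sum>i<m. lam i) > 0)"

end

theory Submission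
  imports Defs
begin

lemma frame_inner: "orthonormal_frame k e \<Longrightarrow> i < k \<Longrightarrow> j < k \<Longrightarrow> inner (e i) (e j) = (if i = j then 1 else 0)"
  unfolding orthonormal_frame_def by blast

lemma frame_sum_delta:
  assumes "orthonormal_frame k e" "j < k"
  shows "(\<Sum>i<k. inner (e j) (e i) *\<^sub>R e i) = e j"
proof -
  have "(\<Sum>i<k. inner (e j) (e i) *\<^sub>R e i) = (\<Sum>i<k. (if i = j then e j else 0))"
    by (rule sum.cong) (auto simp: frame_inner[OF assms(1)] assms(2))
  also have "\<dots> = e j" using assms(2) by (simp add: sum.delta')
  finally show ?thesis .
qed

lemma frame_expand:
  assumes "orthonormal_frame k e" "x \<in> span (e ` {..<k})"
  shows "x = (\<Sum>i<k. inner x (e i) *\<^sub>R e i)"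
  using assms(2)
proof (induction rule: span_induct_alt)
  case base
  then show ?case by simp
next
  case (step c x y)
  then obtain j where j: "j < k" "x = e j" by auto
  have "(\<Sum>i<k. inner (c *\<^sub>R x + y) (e i) *\<^sub>R e i) = c *\<^sub>R (\<Sum>i<k. inner x (e i) *\<^sub>R e i) + (\<Sum>i<k. inner y (e i) *\<^sub>R e i)"
    by (simp add: inner_add_left scaleR_add_left sum.distrib scaleR_sum_right)
  also have "\<dots> = c *\<^sub>R x + y" using step j frame_sum_delta[OF assms(1) j(1)] by simp
  finally show ?case by simp
qed

lemma frame_inner_expand:
  assumes "orthonormal_frame k e" "x \<in> span (e ` {..<k})"
  shows "inner x y = (\<Sum>i<k. inner x (e i) * inner y (e i))"
proof -
  have "inner x y = inner (\<Sum>i<k. inner x (e i) *\<^sub>R e i) y" using frame_expand[OF assms] by simp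
  also have "\<dots> = (\<Sum>i<k. inner x (e i) * inner y (e i))"
    by (simp add: inner_sum_left inner_commute[of y])
  finally show ?thesis .
qed

lemma frame_span_UNIV:
  fixes e :: "nat \<Rightarrow> 'a::euclidean_space"
  assumes "orthonormal_frame DIM('a) e"
  shows "span (e ` {..<DIM('a)}) = UNIV"
proof -
  have inj: "inj_on e {..<DIM('a)}"
    by (rule inj_onI) (metis assms frame_inner lessThan_iff zero_neq_one)
  have ind: "independent (e ` {..<DIM('a)})"
    apply (rule pairwise_orthogonal_independent)
     apply (auto simp: pairwise_def orthogonal_def)
     apply (metis assms frame_inner)
    by (metis assms frame_inner inner_zero_left zero_neq_one)
  have "card (e ` {..<DIM('a)}) = dim (UNIV::'a set)"
    using inj by (simp add: card_image)
  then have "UNIV \<subseteq> span (e ` {..<DIM('a)})"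
    using card_eq_dim[of "e ` {..<DIM('a)}" UNIV] ind by auto
  then show ?thesis by auto
qed




lemma sym_bilinear_inner: "sym_bilinear (inner :: 'a::real_inner \<Rightarrow> 'a \<Rightarrow> real)"
  unfolding sym_bilinear_def bilinear_def
  by (auto intro!: linearI simp: inner_add_left inner_add_right inner_commute)

lemma sym_bilinear_flat: "sym_bilinear (flat_sq (\<nu>::'a::real_inner))"
  unfolding sym_bilinear_def bilinear_def flat_sq_def
  by (auto intro!: linearI simp: inner_add_left inner_add_right algebra_simps)

lemma KN_alg_curv:
  assumes A: "sym_bilinear A" and B: "sym_bilinear B"
  shows "KN A B \<in> alg_curv"
proof -
  have a: "bilinear A" "\<And>x y. A x y = A y x" and b: "bilinear B" "\<And>x y. B x y = B y x"
    using A B by (auto simp: sym_bilinear_def)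
  note ab = bilinear_ladd[OF a(1)] bilinear_radd[OF a(1)] bilinear_lmul[OF a(1)] bilinear_rmul[OF a(1)]
            bilinear_ladd[OF b(1)] bilinear_radd[OF b(1)] bilinear_lmul[OF b(1)] bilinear_rmul[OF b(1)]
  have m: "multilinear4 (KN A B)"
    unfolding multilinear4_def KN_def
    by (auto intro!: linearI simp: ab algebra_simps)
  have s1: "\<And>a b c d. KN A B a b c d = - KN A B b a c d"
    unfolding KN_def by (simp add: algebra_simps)
  have s2: "\<And>a b c d. KN A B a b c d = KN A B c d a b"
    unfolding KN_def by (simp add: algebra_simps a(2) b(2))
  have s3: "\<And>a b c d. KN A B a b c d + KN A B b c a d + KN A B c a b d = 0"
    unfolding KN_def by (simp add: algebra_simps a(2) b(2))
  show ?thesis using m s1 s2 s3 unfolding alg_curv_def by blast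
qed




lemma lin_expand:
  fixes f :: "'a::euclidean_space \<Rightarrow> real"
  assumes "linear f"
  shows "f x = (\<Sum>b\<in>Basis. (x \<bullet> b) * f b)"
  using Linear_Algebra.linear_componentwise[OF assms, of x 1] by (simp add: inner_real_def)

lemma ml_expand:
  fixes T :: "'a::euclidean_space tensor4"
  assumes "multilinear4 T"
  shows "T x y z w = (\<Sum>b1\<in>Basis. (x \<bullet> b1) * (\<Sum>b2\<in>Basis. (y \<bullet> b2) * (\<Sum>b3\<in>Basis. (z \<bullet> b3) * (\<Sum>b4\<in>Basis. (w \<bullet> b4) * T b1 b2 b3 b4))))"
proof -
  have l1: "\<And>b c d. linear (\<lambda>a. T a b c d)" and l2: "\<And>a c d. linear (\<lambda>b. T a b c d)"
   and l3: "\<And>a b d. linear (\<lambda>c. T a b c d)" and l4: "\<And>a b c. linear (\<lambda>d. T a b c d)"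
    using assms unfolding multilinear4_def by auto
  have "T x y z w = (\<Sum>b1\<in>Basis. (x \<bullet> b1) * T b1 y z w)"
    using lin_expand[OF l1] .
  also have "\<dots> = (\<Sum>b1\<in>Basis. (x \<bullet> b1) * (\<Sum>b2\<in>Basis. (y \<bullet> b2) * (\<Sum>b3\<in>Basis. (z \<bullet> b3) * (\<Sum>b4\<in>Basis. (w \<bullet> b4) * T b1 b2 b3 b4))))"
    apply (subst lin_expand[OF l2])
    apply (subst lin_expand[OF l3])
    apply (subst lin_expand[OF l4])
    apply (rule refl)
    done
  finally show ?thesis .
qed

definition tdist :: "'a::euclidean_space tensor4 \<Rightarrow> 'a tensor4 \<Rightarrow> real" where
  "tdist T' T = (\<Sum>b1\<in>Basis. \<Sum>b2\<in>Basis. \<Sum>b3\<in>Basis. \<Sum>b4\<in>Basis. \<bar>T' b1 b2 b3 b4 - T b1 b2 b3 b4\<bar>)"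

lemma coef_le: "\<bar>(x::real)\<bar> \<le> 1 \<Longrightarrow> \<bar>x * d\<bar> \<le> \<bar>d\<bar>"
  by (simp add: abs_mult mult_left_le_one_le)

lemma ml_diff_bound:
  fixes T T' :: "'a::euclidean_space tensor4"
  assumes "multilinear4 T" "multilinear4 T'"
    and "norm x \<le> 1" "norm y \<le> 1" "norm z \<le> 1" "norm w \<le> 1"
  shows "\<bar>T' x y z w - T x y z w\<bar> \<le> tdist T' T"
proof -
  have bx: "\<And>u b. norm u \<le> 1 \<Longrightarrow> b \<in> Basis \<Longrightarrow> \<bar>u \<bullet> b\<bar> \<le> 1"
    using Basis_le_norm order_trans by blast
  have "T' x y z w - T x y z w = (\<Sum>b1\<in>Basis. (x \<bullet> b1) * (\<Sum>b2\<in>Basis. (y \<bullet> b2) * (\<Sum>b3\<in>Basis. (z \<bullet> b3) * (\<Sum>b4\<in>Basis. (w \<bullet> b4) * (T' b1 b2 b3 b4 - T b1 b2 b3 b4)))))"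
    apply (subst ml_expand[OF assms(2)], subst ml_expand[OF assms(1)])
    apply (simp only: sum_subtractf[symmetric] right_diff_distrib[symmetric])
    done
  also have "\<bar>\<dots>\<bar> \<le> tdist T' T"
    unfolding tdist_def
    apply (rule order_trans[OF sum_abs], rule sum_mono)
    apply (rule order_trans[OF coef_le], simp add: bx assms)
    apply (rule order_trans[OF sum_abs], rule sum_mono)
    apply (rule order_trans[OF coef_le], simp add: bx assms)
    apply (rule order_trans[OF sum_abs], rule sum_mono)
    apply (rule order_trans[OF coef_le], simp add: bx assms)
    apply (rule order_trans[OF sum_abs], rule sum_mono)
    apply (rule coef_le, simp add: bx assms)
    done
  finally show ?thesis .
qed

lemma eval_cont: "continuous_on UNIV (\<lambda>T::'a \<Rightarrow> 'a \<Rightarrow> 'a \<Rightarrow> 'a \<Rightarrow> real. T a b c d)"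
proof -
  have c1: "continuous_on UNIV (\<lambda>T::'a \<Rightarrow> 'a \<Rightarrow> 'a \<Rightarrow> 'a \<Rightarrow> real. T a)" by simp
  have c2: "continuous_on UNIV (\<lambda>T::'a \<Rightarrow> 'a \<Rightarrow> 'a \<Rightarrow> real. T b)" by simp
  have c3: "continuous_on UNIV (\<lambda>T::'a \<Rightarrow> 'a \<Rightarrow> real. T c)" by simp
  have c4: "continuous_on UNIV (\<lambda>T::'a \<Rightarrow> real. T d)" by simp
  show ?thesis
    using continuous_on_compose2[OF c4 continuous_on_compose2[OF c3 continuous_on_compose2[OF c2 c1]]]
    by simp
qed

lemma tdist_open: "open {T'. tdist T' T < r}"
proof -
  have "continuous_on UNIV (\<lambda>T'. tdist T' (T::'a::euclidean_space tensor4))"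
    unfolding tdist_def by (intro continuous_intros eval_cont)
  then show ?thesis by (intro open_Collect_less) auto
qed




lemma quad_zero:
  fixes a b :: real
  assumes "\<And>t. 0 \<le> 2*t*a + t^2*b"
  shows "a = 0"
proof (rule ccontr)
  assume "a \<noteq> 0"
  define B where "B = \<bar>b\<bar> + 1"
  have pos: "B > 0" unfolding B_def by simp
  have bB: "b - 2*B < 0" unfolding B_def by (smt (verit) abs_ge_self)
  define t where "t = - a / B"
  have "2*t*a + t^2*b = a^2 * (b - 2*B) / B^2"
    unfolding t_def using pos by (simp add: field_simps power2_eq_square)
  moreover have "a^2 > 0" using \<open>a \<noteq> 0\<close> by simp
  ultimately have "2*t*a + t^2*b < 0" using pos bB by (simp add: divide_neg_pos mult_pos_neg)
  with assms[of t] show False by simp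
qed

lemma quad_ge_min:
  fixes S :: "'a::euclidean_space \<Rightarrow> 'a \<Rightarrow> real"
  assumes S: "bilinear S" and U: "subspace U" and min: "\<forall>x\<in>U. norm x = 1 \<longrightarrow> c \<le> S x x"
    and x: "x \<in> U"
  shows "c * (x \<bullet> x) \<le> S x x"
proof (cases "x = 0")
  case True
  then show ?thesis using bilinear_lzero[OF S] by simp
next
  case False
  define u where "u = (1 / norm x) *\<^sub>R x"
  have "u \<in> U" unfolding u_def using U x by (simp add: subspace_scale)
  moreover have "norm u = 1" unfolding u_def using False by simp
  ultimately have "c \<le> S u u" using min by blast
  have xu: "x = norm x *\<^sub>R u" unfolding u_def using False by simp
  have "S x x = (norm x)^2 * S u u"
    by (subst xu, subst xu) (simp add: bilinear_lmul[OF S] bilinear_rmul[OF S] power2_eq_square)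
  moreover have "x \<bullet> x = (norm x)^2" by (simp add: power2_norm_eq_inner)
  ultimately show ?thesis using mult_right_mono[OF \<open>c \<le> S u u\<close>, of "(norm x)^2"]
    by (simp add: mult.commute)
qed

lemma spectral:
  fixes S :: "'a::euclidean_space \<Rightarrow> 'a \<Rightarrow> real"
  assumes SB: "sym_bilinear S"
  shows "subspace U \<Longrightarrow> dim U = d \<Longrightarrow> \<exists>e lam. orthonormal_frame d e \<and> (\<forall>i<d. e i \<in> U) \<and>
     span (e ` {..<d}) = U \<and> (\<forall>i<d. \<forall>j<d. S (e i) (e j) = (if i = j then lam i else 0)) \<and>
     (\<forall>i j. i \<le> j \<longrightarrow> j < d \<longrightarrow> lam i \<le> lam j)"
proof (induction d arbitrary: U)
  case 0
  then have "U = {0}" using subspace_0 by auto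
  then show ?case by (auto simp: orthonormal_frame_def)
next
  case (Suc k)
  have S: "bilinear S" and Ssym: "\<And>x y. S x y = S y x" using SB by (auto simp: sym_bilinear_def)
  have "\<not> U \<subseteq> {0}" using Suc.prems dim_eq_0 by (metis nat.distinct(1))
  then obtain x0 where x0: "x0 \<in> U" "x0 \<noteq> 0" by auto
  define K where "K = U \<inter> sphere 0 1"
  have "(1 / norm x0) *\<^sub>R x0 \<in> K" unfolding K_def using x0 Suc.prems(1)
    by (simp add: subspace_scale)
  then have Kne: "K \<noteq> {}" by auto
  have Kc: "compact K" unfolding K_def using closed_subspace[OF Suc.prems(1)]
    by (metis Int_commute compact_Int_closed compact_sphere)
  have bb: "bounded_bilinear S" using S bilinear_conv_bounded_bilinear by blast
  have cont: "continuous_on K (\<lambda>x. S x x)"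
    by (rule bounded_bilinear.continuous_on[OF bb]) (auto intro: continuous_on_id)
  obtain f where f: "f \<in> K" and fmin: "\<forall>y\<in>K. S f f \<le> S y y"
    using continuous_attains_inf[OF Kc Kne cont] by blast
  have fU: "f \<in> U" and fn: "norm f = 1" using f unfolding K_def by auto
  have ff: "f \<bullet> f = 1" using fn by (simp add: norm_eq_1)
  have min: "\<forall>x\<in>U. norm x = 1 \<longrightarrow> S f f \<le> S x x" using fmin unfolding K_def by auto
  define U' where "U' = U \<inter> {y. f \<bullet> y = 0}"
  have U'sub: "subspace U'" unfolding U'_def
    by (rule subspace_inter[OF Suc.prems(1) subspace_hyperplane])
  have orth: "S f y = 0" if y: "y \<in> U'" for y
  proof -
    have yU: "y \<in> U" and fy: "f \<bullet> y = 0" using y unfolding U'_def by auto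
    have "0 \<le> 2*t*(S f y) + t^2*(S y y - S f f * (y \<bullet> y))" for t
    proof -
      have "f + t *\<^sub>R y \<in> U" using fU yU Suc.prems(1) by (simp add: subspace_add subspace_scale)
      from quad_ge_min[OF S Suc.prems(1) min this]
      have "S f f * ((f + t *\<^sub>R y) \<bullet> (f + t *\<^sub>R y)) \<le> S (f + t *\<^sub>R y) (f + t *\<^sub>R y)" .
      moreover have "(f + t *\<^sub>R y) \<bullet> (f + t *\<^sub>R y) = 1 + t^2 * (y \<bullet> y)"
        using ff fy by (simp add: inner_add_left inner_add_right inner_commute power2_eq_square)
      moreover have "S (f + t *\<^sub>R y) (f + t *\<^sub>R y) = S f f + 2 * t * S f y + t^2 * S y y"
        by (simp add: bilinear_ladd[OF S] bilinear_radd[OF S] bilinear_lmul[OF S] bilinear_rmul[OF S]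
            Ssym[of y f] power2_eq_square algebra_simps)
      ultimately show ?thesis using ff fy inner_commute[of y f] by (simp add: algebra_simps power2_eq_square)
    qed
    then show ?thesis by (rule quad_zero)
  qed
  have "span U' = U'" using U'sub by simp
  moreover have "f \<notin> U'" using ff unfolding U'_def by auto
  ultimately have fnot: "f \<notin> span U'" using span_minimal[of U' U'] by auto
  have Ueq: "U = span (insert f U')"
  proof
    show "U \<subseteq> span (insert f U')"
    proof
      fix u assume u: "u \<in> U"
      have "u - (f \<bullet> u) *\<^sub>R f \<in> U'" unfolding U'_def using u fU Suc.prems(1) ff
        by (simp add: subspace_diff subspace_scale inner_diff_right)
      then have "u - (f \<bullet> u) *\<^sub>R f \<in> span (insert f U')" by (simp add: span_base)
      moreover have "(f \<bullet> u) *\<^sub>R f \<in> span (insert f U')" by (simp add: span_base span_scale)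
      ultimately have "(u - (f \<bullet> u) *\<^sub>R f) + (f \<bullet> u) *\<^sub>R f \<in> span (insert f U')" by (rule span_add)
      then show "u \<in> span (insert f U')" by simp
    qed
    show "span (insert f U') \<subseteq> U"
      using fU Suc.prems(1) span_minimal[of "insert f U'" U] unfolding U'_def by auto
  qed
  have "dim U = dim U' + 1" using Ueq fnot by (simp add: dim_insert)
  then have dU': "dim U' = k" using Suc.prems(2) by simp
  obtain e' lam' where e': "orthonormal_frame k e'" "\<forall>i<k. e' i \<in> U'" "span (e' ` {..<k}) = U'"
     "\<forall>i<k. \<forall>j<k. S (e' i) (e' j) = (if i = j then lam' i else 0)"
     "\<forall>i j. i \<le> j \<longrightarrow> j < k \<longrightarrow> lam' i \<le> lam' j"
    using Suc.IH[OF U'sub dU'] by blast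
  define e where "e i = (if i = 0 then f else e' (i - 1))" for i
  define lam where "lam i = (if i = 0 then S f f else lam' (i - 1))" for i
  have e'U: "e' i \<in> U" "f \<bullet> e' i = 0" if "i < k" for i using e'(2) that unfolding U'_def by auto
  have "orthonormal_frame (Suc k) e"
    unfolding orthonormal_frame_def
  proof (intro allI impI)
    fix i j assume ij: "i < Suc k" "j < Suc k"
    show "e i \<bullet> e j = (if i = j then 1 else 0)"
    proof (cases "i = 0"; cases "j = 0")
      assume "i \<noteq> 0" "j \<noteq> 0"
      then show ?thesis using ij e'(1) unfolding orthonormal_frame_def e_def by auto
    next
      assume "i = 0" "j \<noteq> 0"
      then show ?thesis using ij e'U(2)[of "j-1"] unfolding e_def by auto
    next
      assume "i \<noteq> 0" "j = 0"
      then show ?thesis using ij e'U(2)[of "i-1"] unfolding e_def by (auto simp: inner_commute)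
    qed (simp add: e_def ff)
  qed
  moreover have "\<forall>i<Suc k. e i \<in> U" using fU e'U unfolding e_def by auto
  moreover have "span (e ` {..<Suc k}) = U"
  proof -
    have "e ` {..<Suc k} = insert f (e' ` {..<k})"
    proof -
      have e0: "e 0 = f" and eS: "(\<lambda>i. e (Suc i)) = e'" unfolding e_def by auto
      show ?thesis unfolding lessThan_Suc_eq_insert_0 image_insert image_image e0 eS by (rule refl)
    qed
    moreover have "span (insert f (e' ` {..<k})) \<subseteq> U"
      using span_minimal[of "insert f (e' ` {..<k})" U] fU e'U(1) Suc.prems(1) by auto
    moreover have "U \<subseteq> span (insert f (e' ` {..<k}))"
    proof -
      have "U' \<subseteq> span (insert f (e' ` {..<k}))"
        using e'(3) span_mono[of "e' ` {..<k}" "insert f (e' ` {..<k})"] by auto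
      then have "insert f U' \<subseteq> span (insert f (e' ` {..<k}))" by (auto intro: span_base)
      then show ?thesis using Ueq span_minimal[OF _ subspace_span] by metis
    qed
    ultimately show ?thesis by auto
  qed
  moreover have "\<forall>i<Suc k. \<forall>j<Suc k. S (e i) (e j) = (if i = j then lam i else 0)"
  proof (intro allI impI)
    fix i j assume ij: "i < Suc k" "j < Suc k"
    show "S (e i) (e j) = (if i = j then lam i else 0)"
    proof (cases "i = 0"; cases "j = 0")
      assume "i \<noteq> 0" "j \<noteq> 0"
      then show ?thesis using ij e'(4) unfolding e_def lam_def by auto
    next
      assume a: "i = 0" "j \<noteq> 0"
      have "S f (e' (j-1)) = 0" using orth e'(2) ij a by auto
      then show ?thesis using a unfolding e_def lam_def by auto
    next
      assume a: "i \<noteq> 0" "j = 0"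
      have "S f (e' (i-1)) = 0" using orth e'(2) ij a by auto
      then show ?thesis using a Ssym[of f] unfolding e_def lam_def by auto
    qed (simp add: e_def lam_def)
  qed
  moreover have "\<forall>i j. i \<le> j \<longrightarrow> j < Suc k \<longrightarrow> lam i \<le> lam j"
  proof (intro allI impI)
    fix i j assume ij: "i \<le> j" "j < Suc k"
    show "lam i \<le> lam j"
    proof (cases "i = 0")
      case True
      show ?thesis
      proof (cases "j = 0")
        case False
        have j1: "j - 1 < k" using ij False by simp
        have "norm (e' (j-1)) = 1" using e'(1) j1 unfolding orthonormal_frame_def by (simp add: norm_eq_1)
        then have "S f f \<le> S (e' (j-1)) (e' (j-1))" using min e'U(1)[OF j1] by blast
        then show ?thesis using True False e'(4) j1 unfolding lam_def by auto
      qed (simp add: True)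
    next
      case False
      then show ?thesis using ij e'(5) unfolding lam_def by auto
    qed
  qed
  ultimately show ?case by blast
qed




lemma tri_swap: "(\<Sum>p<n. \<Sum>q<p. g p q) = (\<Sum>q<n. \<Sum>p\<in>{Suc q..<n}. (g p q :: real))"
proof (induction n)
  case 0 then show ?case by simp
next
  case (Suc n)
  have "(\<Sum>q<Suc n. \<Sum>p\<in>{Suc q..<Suc n}. g p q) = (\<Sum>q<n. \<Sum>p\<in>{Suc q..<Suc n}. g p q)"
    by simp
  also have "\<dots> = (\<Sum>q<n. (\<Sum>p\<in>{Suc q..<n}. g p q) + g n q)"
    by (rule sum.cong) auto
  finally show ?case using Suc by (simp add: sum.distrib)
qed

lemma half_sum:
  fixes g :: "nat \<Rightarrow> nat \<Rightarrow> real"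
  assumes sym: "\<And>p q. g p q = g q p" and diag: "\<And>p. g p p = 0"
  shows "2 * (\<Sum>p<n. \<Sum>q\<in>{Suc p..<n}. g p q) = (\<Sum>p<n. \<Sum>q<n. g p q)"
proof -
  have split: "(\<Sum>q<n. g p q) = (\<Sum>q<p. g p q) + (\<Sum>q\<in>{Suc p..<n}. g p q)" if "p < n" for p
  proof -
    have "{..<n} = {..<p} \<union> {p} \<union> {Suc p..<n}" using that by auto
    then have "(\<Sum>q<n. g p q) = (\<Sum>q\<in>{..<p} \<union> {p} \<union> {Suc p..<n}. g p q)" by simp
    also have "\<dots> = (\<Sum>q<p. g p q) + g p p + (\<Sum>q\<in>{Suc p..<n}. g p q)"
      by (subst sum.union_disjoint, auto)+
    finally show ?thesis using diag by simp
  qed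
  have "(\<Sum>p<n. \<Sum>q<n. g p q) = (\<Sum>p<n. \<Sum>q<p. g p q) + (\<Sum>p<n. \<Sum>q\<in>{Suc p..<n}. g p q)"
    by (simp add: split sum.distrib)
  also have "(\<Sum>p<n. \<Sum>q<p. g p q) = (\<Sum>q<n. \<Sum>p\<in>{Suc q..<n}. g p q)" by (rule tri_swap)
  also have "\<dots> = (\<Sum>p<n. \<Sum>q\<in>{Suc p..<n}. g p q)" by (simp add: sym)
  finally show ?thesis by simp
qed

lemma lagrange:
  fixes u v :: "nat \<Rightarrow> real"
  shows "(\<Sum>p<n. \<Sum>q<n. (u q * v p - u p * v q)^2)
     = 2 * ((\<Sum>p<n. (u p)^2) * (\<Sum>p<n. (v p)^2)) - 2 * (\<Sum>p<n. u p * v p)^2"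
proof -
  have e: "(u q * v p - u p * v q)^2 = (v p)^2*(u q)^2 + (u p)^2*(v q)^2 - 2*((u p * v p)*(u q * v q))" for p q
    by (simp add: power2_eq_square algebra_simps)
  have "(\<Sum>p<n. \<Sum>q<n. (u q * v p - u p * v q)^2)
     = (\<Sum>p<n. \<Sum>q<n. (v p)^2*(u q)^2) + (\<Sum>p<n. \<Sum>q<n. (u p)^2*(v q)^2) - 2*(\<Sum>p<n. \<Sum>q<n. (u p * v p)*(u q * v q))"
    by (simp only: e sum.distrib sum_subtractf sum_distrib_left)
  also have "(\<Sum>p<n. \<Sum>q<n. (v p)^2*(u q)^2) = (\<Sum>p<n. (v p)^2) * (\<Sum>p<n. (u p)^2)"
    by (simp add: sum_product)
  also have "(\<Sum>p<n. \<Sum>q<n. (u p)^2*(v q)^2) = (\<Sum>p<n. (u p)^2) * (\<Sum>p<n. (v p)^2)"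
    by (simp add: sum_product)
  also have "(\<Sum>p<n. \<Sum>q<n. (u p * v p)*(u q * v q)) = (\<Sum>p<n. u p * v p)^2"
    by (simp add: sum_product power2_eq_square)
  finally show ?thesis by simp
qed

lemma tri_prefix:
  fixes a :: "nat \<Rightarrow> real"
  shows "(\<Sum>p<m. \<Sum>q<Suc p. a q) = (\<Sum>q<m. real (m - q) * a q)"
proof (induction m)
  case 0 then show ?case by simp
next
  case (Suc m)
  have "(\<Sum>q<Suc m. real (Suc m - q) * a q) = (\<Sum>q<m. real (Suc m - q) * a q) + a m" by simp
  also have "(\<Sum>q<m. real (Suc m - q) * a q) = (\<Sum>q<m. real (m - q) * a q) + (\<Sum>q<m. a q)"
    by (simp add: sum.distrib[symmetric] Suc_diff_le algebra_simps of_nat_Suc)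
  finally show ?case using Suc by simp
qed

lemma count_ineq:
  fixes a :: "nat \<Rightarrow> real"
  assumes nonneg: "\<And>k. 0 \<le> a k" and mn: "m + 1 \<le> n"
  shows "real m * (\<Sum>k<n. a k) \<le> (\<Sum>p<m. \<Sum>q\<in>{Suc p..<n}. a p + a q)"
proof -
  define A where "A = (\<Sum>k<n. a k)"
  have tail: "(\<Sum>q\<in>{Suc p..<n}. a q) = A - (\<Sum>q<Suc p. a q)" if "p < n" for p
  proof -
    have "{..<n} = {..<Suc p} \<union> {Suc p..<n}" using that by auto
    then have "A = (\<Sum>q<Suc p. a q) + (\<Sum>q\<in>{Suc p..<n}. a q)"
      unfolding A_def using sum.union_disjoint[of "{..<Suc p}" "{Suc p..<n}" a]
      by (simp del: sum.lessThan_Suc lessThan_Suc add: disjoint_iff)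
    then show ?thesis by simp
  qed
  have "(\<Sum>p<m. \<Sum>q\<in>{Suc p..<n}. a p + a q) = (\<Sum>p<m. real (n - Suc p) * a p + (A - (\<Sum>q<Suc p. a q)))"
    by (rule sum.cong) (use mn tail in \<open>auto simp: sum.distrib\<close>)
  also have "\<dots> = (\<Sum>p<m. real (n - Suc p) * a p) + real m * A - (\<Sum>p<m. \<Sum>q<Suc p. a q)"
    by (simp only: sum.distrib sum_subtractf sum_constant card_lessThan add_diff_eq)
  also have "\<dots> = (\<Sum>p<m. real (n - Suc p) * a p) + real m * A - (\<Sum>q<m. real (m - q) * a q)"
    by (simp only: tri_prefix)
  also have "\<dots> \<ge> real m * A"
  proof -
    have "(\<Sum>q<m. real (m - q) * a q) \<le> (\<Sum>p<m. real (n - Suc p) * a p)"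
      by (rule sum_mono) (use mn nonneg in \<open>auto intro!: mult_right_mono\<close>)
    then show ?thesis by simp
  qed
  finally show ?thesis unfolding A_def .
qed

lemma final_ineq:
  fixes lam a :: "nat \<Rightarrow> real"
  assumes sorted: "\<And>i j. i \<le> j \<Longrightarrow> j < k \<Longrightarrow> lam i \<le> lam j"
    and m: "1 \<le> m" "m \<le> k" and a0: "\<And>i. i < k \<Longrightarrow> 0 \<le> a i" and a1: "\<And>i. i < k \<Longrightarrow> a i \<le> 1"
    and asum: "real m \<le> (\<Sum>i<k. a i)" and mu: "0 \<le> lam (m - 1)"
  shows "(\<Sum>i<m. lam i) \<le> (\<Sum>i<k. lam i * a i)"
proof -
  define \<mu> where "\<mu> = lam (m - 1)"
  have un: "{..<k} = {..<m} \<union> {m..<k}" using m by auto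
  have s1: "(\<Sum>i<k. lam i * a i) = (\<Sum>i<m. lam i * a i) + (\<Sum>i\<in>{m..<k}. lam i * a i)"
    by (subst un, rule sum.union_disjoint) auto
  have s2: "(\<Sum>i<k. a i) = (\<Sum>i<m. a i) + (\<Sum>i\<in>{m..<k}. a i)"
    by (subst un, rule sum.union_disjoint) auto
  have "(\<Sum>i<m. lam i * (a i - 1)) \<ge> (\<Sum>i<m. \<mu> * (a i - 1))"
  proof (rule sum_mono)
    fix i assume "i \<in> {..<m}"
    then have "lam i \<le> \<mu>" unfolding \<mu>_def using sorted m by auto
    moreover have "a i - 1 \<le> 0" using a1[of i] \<open>i \<in> {..<m}\<close> m by simp
    ultimately show "\<mu> * (a i - 1) \<le> lam i * (a i - 1)" by (simp add: mult_right_mono_neg)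
  qed
  moreover have "(\<Sum>i\<in>{m..<k}. lam i * a i) \<ge> (\<Sum>i\<in>{m..<k}. \<mu> * a i)"
  proof (rule sum_mono)
    fix i assume "i \<in> {m..<k}"
    then have "\<mu> \<le> lam i" unfolding \<mu>_def using sorted m by auto
    then show "\<mu> * a i \<le> lam i * a i" using a0[of i] \<open>i \<in> {m..<k}\<close> by (simp add: mult_right_mono)
  qed
  moreover have "(\<Sum>i<m. \<mu> * (a i - 1)) + (\<Sum>i\<in>{m..<k}. \<mu> * a i) = \<mu> * ((\<Sum>i<k. a i) - m)"
    by (simp add: s2 sum_distrib_left[symmetric] sum_subtractf algebra_simps)
  moreover have "\<mu> * ((\<Sum>i<k. a i) - m) \<ge> 0" using mu asum unfolding \<mu>_def by simp
  moreover have "(\<Sum>i<m. lam i * (a i - 1)) = (\<Sum>i<m. lam i * a i) - (\<Sum>i<m. lam i)"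
    by (simp add: algebra_simps sum_subtractf)
  ultimately show ?thesis using s1 by linarith
qed

definition Fsum :: "nat \<Rightarrow> (nat \<Rightarrow> 'a::euclidean_space) \<Rightarrow> 'a tensor4 \<Rightarrow> real" where
  "Fsum m e Q = (\<Sum>p<m. \<Sum>q\<in>{p+1..<DIM('a)}. Q (e p) (e q) (e p) (e q))"

lemma cone_C_alt: "cone_C m = {T \<in> alg_curv. \<forall>e. orthonormal_frame DIM('a::euclidean_space) e \<longrightarrow> 0 \<le> Fsum m e (T::'a tensor4)}"
  unfolding cone_C_def Fsum_def by simp

lemma KNval:
  assumes "sym_bilinear S"
  shows "KN S (flat_sq \<nu>) x y x y = S ((\<nu> \<bullet> y) *\<^sub>R x - (\<nu> \<bullet> x) *\<^sub>R y) ((\<nu> \<bullet> y) *\<^sub>R x - (\<nu> \<bullet> x) *\<^sub>R y)"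
proof -
  have S: "bilinear S" and Ssym: "\<And>x y. S x y = S y x" using assms by (auto simp: sym_bilinear_def)
  show ?thesis
    unfolding KN_def flat_sq_def
    by (simp add: bilinear_lsub[OF S] bilinear_rsub[OF S] bilinear_lmul[OF S] bilinear_rmul[OF S]
        Ssym[of y x] algebra_simps)
qed

lemma W_frame:
  fixes f :: "nat \<Rightarrow> 'a::euclidean_space"
  assumes "orthonormal_frame (DIM('a) - 1) f" "\<forall>i<DIM('a) - 1. f i \<in> W"
    and "\<forall>w\<in>W. \<nu> \<bullet> w = 0" "norm \<nu> = 1"
  shows "orthonormal_frame DIM('a) (\<lambda>i. if i < DIM('a) - 1 then f i else \<nu>)"
  unfolding orthonormal_frame_def
proof (intro allI impI)
  fix i j assume ij: "i < DIM('a)" "j < DIM('a)"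
  have nn: "\<nu> \<bullet> \<nu> = 1" using assms(4) by (simp add: norm_eq_1)
  show "(if i < DIM('a) - 1 then f i else \<nu>) \<bullet> (if j < DIM('a) - 1 then f j else \<nu>) = (if i = j then 1 else 0)"
    using ij assms(1,2,3) nn unfolding orthonormal_frame_def
    by (auto simp: inner_commute)
qed

lemma W_char:
  fixes f :: "nat \<Rightarrow> 'a::euclidean_space"
  assumes "orthonormal_frame (DIM('a) - 1) f" "\<forall>i<DIM('a) - 1. f i \<in> W"
    "span (f ` {..<DIM('a) - 1}) = W"
    and "\<forall>w\<in>W. \<nu> \<bullet> w = 0" "norm \<nu> = 1" and x: "\<nu> \<bullet> x = 0"
  shows "x \<in> W"
proof -
  define g where "g i = (if i < DIM('a) - 1 then f i else \<nu>)" for i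
  have g: "orthonormal_frame DIM('a) g" unfolding g_def using W_frame assms by blast
  have n: "DIM('a) = Suc (DIM('a) - 1)" using DIM_positive[where 'a='a] by linarith
  have "x = (\<Sum>i<DIM('a). (x \<bullet> g i) *\<^sub>R g i)" using frame_expand[OF g] frame_span_UNIV[OF g] by auto
  also have "\<dots> = (\<Sum>i<DIM('a) - 1. (x \<bullet> g i) *\<^sub>R g i) + (x \<bullet> g (DIM('a) - 1)) *\<^sub>R g (DIM('a) - 1)"
    by (subst n, subst sum.lessThan_Suc) simp
  also have "\<dots> = (\<Sum>i<DIM('a) - 1. (x \<bullet> f i) *\<^sub>R f i)"
    using x by (simp add: g_def inner_commute)
  also have "\<dots> \<in> W"
    apply (subst assms(3)[symmetric])
    apply (rule span_sum, rule span_scale, rule span_base)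
    by auto
  finally show ?thesis .
qed

lemma S_expand:
  fixes f :: "nat \<Rightarrow> 'a::euclidean_space"
  assumes S: "bilinear S" and f: "orthonormal_frame k f" "span (f ` {..<k}) = W"
    and diag: "\<forall>i<k. \<forall>j<k. S (f i) (f j) = (if i = j then lam i else 0)"
    and x: "x \<in> W"
  shows "S x x = (\<Sum>i<k. lam i * (x \<bullet> f i)^2)"
proof -
  have xe: "x = (\<Sum>i<k. (x \<bullet> f i) *\<^sub>R f i)" using frame_expand[OF f(1)] f(2) x by auto
  have l1: "linear (\<lambda>a. S a y)" for y using S by (simp add: bilinear_def)
  have l2: "linear (\<lambda>b. S y b)" for y using S by (simp add: bilinear_def)
  have "S x x = (\<Sum>i<k. (x \<bullet> f i) * S (f i) x)"
    by (subst xe) (simp add: linear_sum[OF l1] linear_scale[OF l1])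
  also have "\<dots> = (\<Sum>i<k. (x \<bullet> f i) * (\<Sum>j<k. (x \<bullet> f j) * S (f i) (f j)))"
    by (subst xe) (simp add: linear_sum[OF l2] linear_scale[OF l2])
  also have "\<dots> = (\<Sum>i<k. lam i * (x \<bullet> f i)^2)"
  proof (rule sum.cong)
    fix i assume i: "i \<in> {..<k}"
    have "(\<Sum>j<k. (x \<bullet> f j) * S (f i) (f j)) = (\<Sum>j<k. if j = i then (x \<bullet> f i) * lam i else 0)"
      by (rule sum.cong) (use i diag in auto)
    also have "\<dots> = (x \<bullet> f i) * lam i" using i by simp
    finally show "(x \<bullet> f i) * (\<Sum>j<k. (x \<bullet> f j) * S (f i) (f j)) = lam i * (x \<bullet> f i)^2"
      by (simp add: power2_eq_square)
  qed simp
  finally show ?thesis .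
qed

lemma lower_bound:
  fixes S :: "'a::euclidean_space \<Rightarrow> 'a \<Rightarrow> real" and f e :: "nat \<Rightarrow> 'a"
  assumes SB: "sym_bilinear S" and Wnu: "\<forall>w\<in>W. \<nu> \<bullet> w = 0" and nu: "norm \<nu> = 1"
    and f: "orthonormal_frame (DIM('a) - 1) f" "\<forall>i<DIM('a) - 1. f i \<in> W"
       "span (f ` {..<DIM('a) - 1}) = W"
    and diag: "\<forall>i<DIM('a) - 1. \<forall>j<DIM('a) - 1. S (f i) (f j) = (if i = j then lam i else 0)"
    and sorted: "\<forall>i j. i \<le> j \<longrightarrow> j < DIM('a) - 1 \<longrightarrow> lam i \<le> lam j"
    and m: "1 \<le> m" "m \<le> DIM('a) - 1" and pos: "0 < (\<Sum>i<m. lam i)"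
    and e: "orthonormal_frame DIM('a) e"
  shows "(\<Sum>i<m. lam i) \<le> Fsum m e (KN S (flat_sq \<nu>))"
proof -
  define n where "n = DIM('a)"
  define k where "k = n - 1"
  have e': "orthonormal_frame n e" using e unfolding n_def .
  have S: "bilinear S" using SB by (simp add: sym_bilinear_def)
  have nn: "\<nu> \<bullet> \<nu> = 1" using nu by (simp add: norm_eq_1)
  define u where "u p = \<nu> \<bullet> e p" for p
  define w where "w p q = u q *\<^sub>R e p - u p *\<^sub>R e q" for p q
  have wW: "w p q \<in> W" for p q
    by (rule W_char[OF f Wnu nu]) (simp add: w_def u_def inner_diff_right)
  have espan: "x \<in> span (e ` {..<n})" for x using frame_span_UNIV[OF e] unfolding n_def by simp
  have Sx: "S x x = (\<Sum>i<k. lam i * (x \<bullet> f i)^2)" if "x \<in> W" for x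
    using S_expand[OF S f(1) f(3) diag that] unfolding k_def n_def .
  define a where "a i = (\<Sum>p<m. \<Sum>q\<in>{Suc p..<n}. (w p q \<bullet> f i)^2)" for i
  have Fe: "Fsum m e (KN S (flat_sq \<nu>)) = (\<Sum>i<k. lam i * a i)"
  proof -
    have "Fsum m e (KN S (flat_sq \<nu>)) = (\<Sum>p<m. \<Sum>q\<in>{Suc p..<n}. S (w p q) (w p q))"
      unfolding Fsum_def n_def w_def u_def by (simp add: KNval[OF SB])
    also have "\<dots> = (\<Sum>p<m. \<Sum>q\<in>{Suc p..<n}. \<Sum>i<k. lam i * (w p q \<bullet> f i)^2)"
      by (simp add: Sx wW)
    also have "\<dots> = (\<Sum>i<k. lam i * a i)"
      unfolding a_def by (simp add: sum_distrib_left sum.swap[of _ "{..<k}"])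
    finally show ?thesis .
  qed
  have u2: "(\<Sum>p<n. (u p)^2) = 1"
    using frame_inner_expand[OF e' espan[of \<nu>], of \<nu>] nn unfolding u_def n_def by (simp add: power2_eq_square)
  have a0: "0 \<le> a i" for i unfolding a_def by (intro sum_nonneg) simp
  have a1: "a i \<le> 1" if i: "i < k" for i
  proof -
    define x where "x = f i"
    have xW: "x \<in> W" using f(2) i unfolding x_def k_def n_def by simp
    have xx: "x \<bullet> x = 1" using f(1) i unfolding x_def orthonormal_frame_def k_def n_def by simp
    have nx: "\<nu> \<bullet> x = 0" using Wnu xW by simp
    define v where "v p = x \<bullet> e p" for p
    define g where "g p q = (u q * v p - u p * v q)^2" for p q
    have wg: "(w p q \<bullet> x)^2 = g p q" for p q
      unfolding w_def g_def v_def by (simp add: inner_diff_left inner_diff_right inner_commute[of _ x])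
    have "a i = (\<Sum>p<m. \<Sum>q\<in>{Suc p..<n}. g p q)" unfolding a_def x_def[symmetric] wg ..
    also have "\<dots> \<le> (\<Sum>p<n. \<Sum>q\<in>{Suc p..<n}. g p q)"
      by (rule sum_mono2) (use m in \<open>auto simp: n_def g_def intro!: sum_nonneg\<close>)
    also have "2 * \<dots> = (\<Sum>p<n. \<Sum>q<n. g p q)"
      by (rule half_sum) (simp_all add: g_def power2_eq_square algebra_simps)
    also have "\<dots> = 2 * ((\<Sum>p<n. (u p)^2) * (\<Sum>p<n. (v p)^2)) - 2 * (\<Sum>p<n. u p * v p)^2"
      unfolding g_def by (rule lagrange)
    also have "(\<Sum>p<n. (v p)^2) = 1"
      using frame_inner_expand[OF e' espan[of x], of x] xx unfolding v_def n_def by (simp add: power2_eq_square)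
    also have "(\<Sum>p<n. u p * v p) = 0"
      using frame_inner_expand[OF e' espan[of \<nu>], of x] nx unfolding u_def v_def n_def by simp
    finally show ?thesis using u2 by simp
  qed
  have asum: "real m \<le> (\<Sum>i<k. a i)"
  proof -
    have "(\<Sum>i<k. a i) = (\<Sum>p<m. \<Sum>q\<in>{Suc p..<n}. \<Sum>i<k. (w p q \<bullet> f i)^2)"
      unfolding a_def by (simp add: sum.swap[of _ "{..<k}"])
    also have "\<dots> = (\<Sum>p<m. \<Sum>q\<in>{Suc p..<n}. (u p)^2 + (u q)^2)"
    proof (intro sum.cong refl)
      fix p q assume q: "q \<in> {Suc p..<n}"
      have "(\<Sum>i<k. (w p q \<bullet> f i)^2) = w p q \<bullet> w p q"
        using frame_inner_expand[OF f(1), of "w p q" "w p q"] wW f(3) unfolding k_def n_def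
        by (simp add: power2_eq_square)
      also have "\<dots> = (u p)^2 + (u q)^2"
        using q frame_inner[OF e', of p q] frame_inner[OF e', of q p] frame_inner[OF e', of p p] frame_inner[OF e', of q q]
        unfolding w_def n_def
        by (simp add: inner_diff_left inner_diff_right power2_eq_square algebra_simps)
      finally show "(\<Sum>i<k. (w p q \<bullet> f i)^2) = (u p)^2 + (u q)^2" .
    qed
    also have "\<dots> \<ge> real m * (\<Sum>p<n. (u p)^2)"
      by (rule count_ineq) (use m in \<open>auto simp: n_def\<close>)
    finally show ?thesis using u2 by simp
  qed
  have mu: "0 \<le> lam (m - 1)"
  proof (rule ccontr)
    assume "\<not> 0 \<le> lam (m - 1)"
    then have "(\<Sum>i<m. lam i) \<le> (\<Sum>i<m. lam (m - 1))"
      by (intro sum_mono) (use sorted m in auto)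
    also have "\<dots> \<le> 0" using \<open>\<not> 0 \<le> lam (m - 1)\<close> by (simp add: mult_nonneg_nonpos)
    finally show False using pos by simp
  qed
  have "(\<Sum>i<m. lam i) \<le> (\<Sum>i<k. lam i * a i)"
    by (rule final_ineq[where k=k]) (use sorted m a0 a1 asum mu in \<open>auto simp: k_def n_def\<close>)
  then show ?thesis using Fe by simp
qed

lemma alg_curvD:
  assumes "T \<in> alg_curv"
  shows "multilinear4 T" "\<And>a b c d. T a b c d = - T b a c d" "\<And>a b c d. T a b c d = T c d a b"
    "\<And>a b c d. T a b c d + T b c a d + T c a b d = 0"
  using assms unfolding alg_curv_def mem_Collect_eq by blast+

lemma alg_curv_comb:
  assumes A: "A \<in> alg_curv" and B: "B \<in> alg_curv"
  shows "(\<lambda>a b c d. A a b c d - t * B a b c d) \<in> alg_curv"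
proof -
  have mA: "multilinear4 A" and mB: "multilinear4 B" using alg_curvD[OF A] alg_curvD[OF B] by blast+
  have lin: "linear (\<lambda>x. F x - t * G x)" if "linear F" "linear G" for F G :: "'a \<Rightarrow> real"
    using that by (intro linearI) (simp_all add: linear_add linear_scale algebra_simps)
  have f1: "multilinear4 (\<lambda>a b c d. A a b c d - t * B a b c d)"
    using mA mB unfolding multilinear4_def by (auto intro!: lin)
  have f2: "\<forall>a b c d. A a b c d - t * B a b c d = - (A b a c d - t * B b a c d)"
  proof (intro allI)
    fix a b c d
    have "A a b c d = - A b a c d" "B a b c d = - B b a c d" by (rule alg_curvD(2)[OF A], rule alg_curvD(2)[OF B])
    then show "A a b c d - t * B a b c d = - (A b a c d - t * B b a c d)" by (simp only: minus_diff_eq mult_minus_right)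
  qed
  have f3: "\<forall>a b c d. A a b c d - t * B a b c d = A c d a b - t * B c d a b"
  proof (intro allI)
    fix a b c d
    have "A a b c d = A c d a b" "B a b c d = B c d a b" by (rule alg_curvD(3)[OF A], rule alg_curvD(3)[OF B])
    then show "A a b c d - t * B a b c d = A c d a b - t * B c d a b" by (simp only:)
  qed
  have f4: "\<forall>a b c d. (A a b c d - t * B a b c d) + (A b c a d - t * B b c a d) + (A c a b d - t * B c a b d) = 0"
  proof (intro allI)
    fix a b c d
    have h: "A a b c d + A b c a d + A c a b d = 0" "B a b c d + B b c a d + B c a b d = 0"
      by (rule alg_curvD(4)[OF A], rule alg_curvD(4)[OF B])
    have "(A a b c d - t * B a b c d) + (A b c a d - t * B b c a d) + (A c a b d - t * B c a b d)
        = (A a b c d + A b c a d + A c a b d) - t * (B a b c d + B b c a d + B c a b d)"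
      by (simp only: distrib_left diff_add_eq add_diff_eq diff_diff_eq add.assoc add.commute add.left_commute)
    then show "(A a b c d - t * B a b c d) + (A b c a d - t * B b c a d) + (A c a b d - t * B c a b d) = 0"
      using h by (simp only: mult_zero_right diff_self)
  qed
  show ?thesis unfolding alg_curv_def mem_Collect_eq
    apply (intro conjI)
       apply (fact f1)
      apply (fact f2)
     apply (fact f3)
    apply (fact f4)
    done
qed

lemma gamma_cont:
  "continuous_on UNIV (\<lambda>t::real. (\<lambda>a b c d. (A::'a tensor4) a b c d - t * B a b c d))"
  by (intro continuous_on_coordinatewise_then_product continuous_intros)

lemma R_val:
  assumes "orthonormal_frame n e" "p < n" "q < n" "p \<noteq> q"
  shows "KN inner inner (e p) (e q) (e p) (e q) = 2"
  using frame_inner[OF assms(1) assms(2) assms(3)] frame_inner[OF assms(1) assms(3) assms(2)]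
    frame_inner[OF assms(1) assms(2) assms(2)] frame_inner[OF assms(1) assms(3) assms(3)] assms(4)
  unfolding KN_def by simp

theorem proposition3p1:
  fixes S :: "'a::euclidean_space \<Rightarrow> 'a \<Rightarrow> real"
    and W :: "'a set" and \<nu> :: 'a and m :: nat
  assumes "sym_bilinear S"
    and "subspace W" and "dim W = DIM('a) - 1"
    and "\<forall>w\<in>W. inner \<nu> w = 0" and "norm \<nu> = 1"
    and "1 \<le> m" and "m \<le> DIM('a) - 1"
  shows "m_positive_on m S W \<longleftrightarrow>
         KN S (flat_sq \<nu>) \<in> (top_of_set alg_curv) interior_of (cone_C m)"
proof -
  note SB = assms(1) and Wsub = assms(2) and dW = assms(3) and Wnu = assms(4) and nu = assms(5)
    and m = assms(6,7)
  define n where "n = DIM('a)"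
  define T where "T = KN S (flat_sq \<nu>)"
  have Tc: "T \<in> alg_curv" unfolding T_def by (rule KN_alg_curv[OF SB sym_bilinear_flat])
  have frame_norm: "norm (e i) = 1" if "orthonormal_frame n e" "i < n" for e i
    using frame_inner[OF that(1) that(2) that(2)] by (simp add: norm_eq_1)
  show ?thesis
  proof
    assume "m_positive_on m S W"
    then obtain lam f where sorted: "\<forall>i j. i \<le> j \<longrightarrow> j < DIM('a) - 1 \<longrightarrow> lam i \<le> lam j"
      and f: "orthonormal_frame (DIM('a) - 1) f" "\<forall>i<DIM('a) - 1. f i \<in> W"
       "span (f ` {..<DIM('a) - 1}) = W"
      and diag: "\<forall>i<DIM('a) - 1. \<forall>j<DIM('a) - 1. S (f i) (f j) = (if i = j then lam i else 0)"
      and pos: "0 < (\<Sum>i<m. lam i)"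
      unfolding m_positive_on_def eigenvalues_on_def dW by blast
    define c where "c = (\<Sum>i<m. lam i)"
    have lb: "c \<le> Fsum m e T" if "orthonormal_frame DIM('a) e" for e
      unfolding c_def T_def by (rule lower_bound[OF SB Wnu nu f diag sorted m pos that])
    define N where "N = (\<Sum>p<m. \<Sum>q\<in>{p+1..<n}. (1::real))"
    have N0: "0 \<le> N" unfolding N_def by (intro sum_nonneg) auto
    define r where "r = c / (N + 1)"
    have Nr: "N * r < c" unfolding r_def using N0 pos c_def
      by (simp add: field_simps)
    define Ob where "Ob = {T'. tdist T' T < r}"
    have "openin (top_of_set alg_curv) (alg_curv \<inter> Ob)"
      unfolding Ob_def by (rule openin_open_Int[OF tdist_open])
    moreover have "T \<in> alg_curv \<inter> Ob"
      using Tc pos unfolding Ob_def tdist_def r_def c_def using N0 by simp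
    moreover have "alg_curv \<inter> Ob \<subseteq> cone_C m"
    proof
      fix T' assume T': "T' \<in> alg_curv \<inter> Ob"
      have mT: "multilinear4 T" "multilinear4 T'" using Tc T' unfolding alg_curv_def by auto
      have "0 \<le> Fsum m e T'" if e: "orthonormal_frame DIM('a) e" for e
      proof -
        have e': "orthonormal_frame n e" using e unfolding n_def .
        have "Fsum m e T - Fsum m e T' = (\<Sum>p<m. \<Sum>q\<in>{p+1..<n}. T (e p) (e q) (e p) (e q) - T' (e p) (e q) (e p) (e q))"
          unfolding Fsum_def n_def by (simp add: sum_subtractf)
        also have "\<dots> \<le> (\<Sum>p<m. \<Sum>q\<in>{p+1..<n}. tdist T' T)"
        proof (intro sum_mono)
          fix p q assume p: "p \<in> {..<m}" and q: "q \<in> {p+1..<n}"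
          have pn: "p < n" using p q by auto
          have qn: "q < n" using q by auto
          have "\<bar>T' (e p) (e q) (e p) (e q) - T (e p) (e q) (e p) (e q)\<bar> \<le> tdist T' T"
            by (rule ml_diff_bound[OF mT]) (simp_all add: frame_norm[OF e' pn] frame_norm[OF e' qn])
          then show "T (e p) (e q) (e p) (e q) - T' (e p) (e q) (e p) (e q) \<le> tdist T' T" by simp
        qed
        also have "\<dots> = N * tdist T' T" unfolding N_def by (simp add: sum_distrib_right)
        also have "\<dots> \<le> N * r" using T' N0 unfolding Ob_def by (simp add: mult_left_mono)
        finally have "Fsum m e T - Fsum m e T' \<le> N * r" .
        then show ?thesis using lb[OF e] Nr by simp
      qed
      then show "T' \<in> cone_C m" using T' unfolding cone_C_alt by blast
    qed
    ultimately show "KN S (flat_sq \<nu>) \<in> (top_of_set alg_curv) interior_of (cone_C m)"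
      unfolding interior_of_def T_def by blast
  next
    assume "KN S (flat_sq \<nu>) \<in> (top_of_set alg_curv) interior_of (cone_C m)"
    then obtain V where V: "openin (top_of_set alg_curv) V" "T \<in> V" "V \<subseteq> cone_C m"
      unfolding interior_of_def T_def by blast
    then obtain Ob where Ob: "open Ob" "V = alg_curv \<inter> Ob" unfolding openin_open by blast
    define R where "R = (KN inner inner :: 'a tensor4)"
    have Rc: "R \<in> alg_curv" unfolding R_def by (rule KN_alg_curv[OF sym_bilinear_inner sym_bilinear_inner])
    define \<gamma> where "\<gamma> t = (\<lambda>a b c d. T a b c d - t * R a b c d)" for t :: real
    have "open (\<gamma> -` Ob)" unfolding \<gamma>_def by (rule open_vimage[OF Ob(1) gamma_cont])
    moreover have "0 \<in> \<gamma> -` Ob" using V Ob unfolding \<gamma>_def by simp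
    ultimately obtain \<epsilon> where eps: "\<epsilon> > 0" "ball 0 \<epsilon> \<subseteq> \<gamma> -` Ob" by (rule openE)
    define t where "t = \<epsilon> / 2"
    have t: "t > 0" "t \<in> ball 0 \<epsilon>" using eps unfolding t_def by auto
    have "\<gamma> t \<in> cone_C m" using t eps alg_curv_comb[OF Tc Rc, of t] V Ob unfolding \<gamma>_def by blast
    then have Fg: "0 \<le> Fsum m e (\<gamma> t)" if "orthonormal_frame DIM('a) e" for e
      using that unfolding cone_C_alt by blast
    have Fpos: "0 < Fsum m e T" if e: "orthonormal_frame DIM('a) e" for e
    proof -
      have e': "orthonormal_frame n e" using e unfolding n_def .
      have "Fsum m e (\<gamma> t) = Fsum m e T - t * Fsum m e R"
        unfolding Fsum_def \<gamma>_def by (simp add: sum_subtractf sum_distrib_left)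
      moreover have "0 < Fsum m e R"
      proof -
        have "Fsum m e R = (\<Sum>p<m. \<Sum>q\<in>{p+1..<n}. (2::real))"
          unfolding Fsum_def n_def[symmetric] R_def
          by (intro sum.cong refl) (use R_val[OF e'] m in \<open>auto simp: n_def\<close>)
        also have "\<dots> > 0"
          by (intro sum_pos) (use m in \<open>auto simp: n_def lessThan_empty_iff\<close>)
        finally show ?thesis .
      qed
      ultimately show ?thesis using Fg[OF e] t(1) by (smt (verit) mult_pos_pos)
    qed
    obtain f lam where f: "orthonormal_frame (DIM('a) - 1) f" "\<forall>i<DIM('a) - 1. f i \<in> W"
       "span (f ` {..<DIM('a) - 1}) = W"
      and diag: "\<forall>i<DIM('a) - 1. \<forall>j<DIM('a) - 1. S (f i) (f j) = (if i = j then lam i else 0)"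
      and sorted: "\<forall>i j. i \<le> j \<longrightarrow> j < DIM('a) - 1 \<longrightarrow> lam i \<le> lam j"
      using spectral[OF SB Wsub dW] by blast
    define g where "g i = (if i < DIM('a) - 1 then f i else \<nu>)" for i
    have g: "orthonormal_frame DIM('a) g" unfolding g_def by (rule W_frame[OF f(1,2) Wnu nu])
    have nn: "\<nu> \<bullet> \<nu> = 1" using nu by (simp add: norm_eq_1)
    have "Fsum m g T = (\<Sum>p<m. lam p)"
      unfolding Fsum_def
    proof (intro sum.cong refl)
      fix p assume p: "p \<in> {..<m}"
      have pk: "p < DIM('a) - 1" using p m by auto
      have gp: "g p = f p" "\<nu> \<bullet> g p = 0" using pk f(2) Wnu unfolding g_def by auto
      have "(\<Sum>q\<in>{p+1..<DIM('a)}. T (g p) (g q) (g p) (g q)) = (\<Sum>q\<in>{p+1..<DIM('a)}. if q = DIM('a) - 1 then lam p else 0)"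
      proof (intro sum.cong refl)
        fix q assume q: "q \<in> {p+1..<DIM('a)}"
        have "T (g p) (g q) (g p) (g q) = S (f p) (f p) * (\<nu> \<bullet> g q)^2"
          unfolding T_def KN_def flat_sq_def using gp by (simp add: power2_eq_square)
        also have "\<dots> = (if q = DIM('a) - 1 then lam p else 0)"
          using q diag pk f(2) Wnu nn unfolding g_def by auto
        finally show "T (g p) (g q) (g p) (g q) = (if q = DIM('a) - 1 then lam p else 0)" .
      qed
      also have "\<dots> = lam p" using pk by simp
      finally show "(\<Sum>q\<in>{p+1..<DIM('a)}. T (g p) (g q) (g p) (g q)) = lam p" .
    qed
    then have "0 < (\<Sum>p<m. lam p)" using Fpos[OF g] by simp
    then show "m_positive_on m S W"
      unfolding m_positive_on_def eigenvalues_on_def dW using f diag sorted by blast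
  qed
qed

end
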